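(* Let $k$ be a positive integer and let $G$ be the union of a set $\mathcal L$ of $k$ pairwise edge-disjoint complete subgraphs, each with $k$ vertices (so $V(G)=\bigcup_{L\in\mathcal L}V(L)$ and $E(G)=\bigcup_{L\in\mathcal L}E(L)$). Then $\omega(G)=k$. Furthermore, if $G$ has a maximal clique of size $k$ whose vertex set is not the vertex set of a member of $\mathcal L$, then $G$ is chordal.
   Context: All graphs are finite and simple; $\omega$ is the clique number. A graph is chordal if it has no induced cycle of length at least $4$. *)

theory Defs
  imports Main
begin

text \<open>A simple graph is given by a vertex set V and a symmetric irreflexive
adjacency relation E (only its restriction to V matters).\<close>

definition is_clique :: "'a set \<Rightarrow> ('a \<Rightarrow> 'a \<Rightarrow> bool) \<Rightarrow> 'a set \<Rightarrow> bool" where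
  "is_clique V E C \<longleftrightarrow> C \<subseteq> V \<and> (\<forall>u\<in>C. \<forall>v\<in>C. u \<noteq> v \<longrightarrow> E u v)"

definition is_maximal_clique :: "'a set \<Rightarrow> ('a \<Rightarrow> 'a \<Rightarrow> bool) \<Rightarrow> 'a set \<Rightarrow> bool" where
  "is_maximal_clique V E C \<longleftrightarrow> is_clique V E C \<and> (\<forall>D. is_clique V E D \<and> C \<subseteq> D \<longrightarrow> D = C)"

definition clique_number :: "'a set \<Rightarrow> ('a \<Rightarrow> 'a \<Rightarrow> bool) \<Rightarrow> nat" where
  "clique_number V E = Max (card ` {C. is_clique V E C})"

definition induced_cycle :: "'a set \<Rightarrow> ('a \<Rightarrow> 'a \<Rightarrow> bool) \<Rightarrow> nat \<Rightarrow> (nat \<Rightarrow> 'a) \<Rightarrow> bool" where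
  "induced_cycle V E n f \<longleftrightarrow> inj_on f {..<n} \<and> f ` {..<n} \<subseteq> V \<and>
     (\<forall>i<n. \<forall>j<n. i \<noteq> j \<longrightarrow> (E (f i) (f j) \<longleftrightarrow> (j = Suc i mod n \<or> i = Suc j mod n)))"

definition chordal :: "'a set \<Rightarrow> ('a \<Rightarrow> 'a \<Rightarrow> bool) \<Rightarrow> bool" where
  "chordal V E \<longleftrightarrow> \<not> (\<exists>n f. n \<ge> 4 \<and> induced_cycle V E n f)"

definition union_adj :: "'a set set \<Rightarrow> 'a \<Rightarrow> 'a \<Rightarrow> bool" where
  "union_adj \<L> u v \<longleftrightarrow> u \<noteq> v \<and> (\<exists>L\<in>\<L>. u \<in> L \<and> v \<in> L)"

end

theory Submission
  imports Defs Complex_Main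
begin
lemma line_unique:
  assumes H4: "\<forall>T1\<in>B. \<forall>T2\<in>B. T1\<noteq>T2 \<longrightarrow> card(T1\<inter>T2) \<le> 1"
    and fin: "finite T1"
    and "T1\<in>B" "T2\<in>B" "x\<in>T1" "y\<in>T1" "x\<in>T2" "y\<in>T2" "x\<noteq>y"
  shows "T1 = T2"
proof (rule ccontr)
  assume "T1 \<noteq> T2"
  hence "card (T1\<inter>T2) \<le> 1" using H4 assms by blast
  moreover have "card {x,y} \<le> card (T1\<inter>T2)"
    by (rule card_mono) (use fin assms in auto)
  ultimately show False using assms by simp
qed

lemma count_lines:
  assumes H1: "finite C" and H2: "\<forall>T\<in>B. T \<subseteq> C"
    and H3: "\<forall>x\<in>C. \<forall>y\<in>C. x\<noteq>y \<longrightarrow> (\<exists>T\<in>B. x\<in>T \<and> y\<in>T)"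
    and H4: "\<forall>T1\<in>B. \<forall>T2\<in>B. T1\<noteq>T2 \<longrightarrow> card(T1\<inter>T2) \<le> 1"
    and p: "p\<in>C" "T\<in>B" "p\<notin>T"
  shows "card T + card {T'\<in>B. p\<in>T' \<and> T'\<inter>T = {}} \<le> card {T'\<in>B. p\<in>T'}"
proof -
  have finB: "finite B" using H1 H2 by (metis Pow_iff finite_Pow_iff finite_subset subsetI)
  define g where "g q = (SOME T'. T'\<in>B \<and> p\<in>T' \<and> q\<in>T')" for q
  have g: "g q \<in> B \<and> p \<in> g q \<and> q \<in> g q" if "q \<in> T" for q
  proof -
    have "q \<in> C" "q \<noteq> p" using that H2 p by auto
    then have "\<exists>T'. T'\<in>B \<and> p\<in>T' \<and> q\<in>T'" using H3 p by blast
    then show ?thesis unfolding g_def by (rule someI_ex)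
  qed
  have inj: "inj_on g T"
  proof (rule inj_onI)
    fix q q' assume q: "q \<in> T" "q' \<in> T" "g q = g q'"
    show "q = q'"
    proof (rule ccontr)
      assume "q \<noteq> q'"
      have "finite (g q)" using g[OF q(1)] H2 H1 finite_subset by blast
      then have "g q = T" using line_unique[OF H4, of "g q" T q q'] g[OF q(1)] g[OF q(2)] q p \<open>q\<noteq>q'\<close> by auto
      then show False using g[OF q(1)] p by auto
    qed
  qed
  have img: "g ` T \<subseteq> {T'\<in>B. p\<in>T' \<and> T'\<inter>T \<noteq> {}}" using g by auto
  have "card T = card (g ` T)" using inj by (simp add: card_image)
  also have "\<dots> \<le> card {T'\<in>B. p\<in>T' \<and> T'\<inter>T \<noteq> {}}"
    by (rule card_mono) (use finB img in auto)
  finally have 1: "card T \<le> card {T'\<in>B. p\<in>T' \<and> T'\<inter>T \<noteq> {}}" .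
  have "{T'\<in>B. p\<in>T'} = {T'\<in>B. p\<in>T' \<and> T'\<inter>T \<noteq> {}} \<union> {T'\<in>B. p\<in>T' \<and> T'\<inter>T = {}}" by auto
  then have "card {T'\<in>B. p\<in>T'} = card {T'\<in>B. p\<in>T' \<and> T'\<inter>T \<noteq> {}} + card {T'\<in>B. p\<in>T' \<and> T'\<inter>T = {}}"
    using finB by (simp add: card_Un_disjoint[symmetric] disjoint_iff)
  then show ?thesis using 1 by linarith
qed

lemma dBE:
  assumes H1: "finite C" and H2: "\<forall>T\<in>B. T \<subseteq> C"
    and H3: "\<forall>x\<in>C. \<forall>y\<in>C. x\<noteq>y \<longrightarrow> (\<exists>T\<in>B. x\<in>T \<and> y\<in>T)"
    and H4: "\<forall>T1\<in>B. \<forall>T2\<in>B. T1\<noteq>T2 \<longrightarrow> card(T1\<inter>T2) \<le> 1"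
    and H5: "C \<notin> B" and H6: "2 \<le> card C"
  shows "card C \<le> card B \<and> (card C = card B \<longrightarrow>
           (\<forall>p\<in>C. \<forall>T\<in>B. p\<notin>T \<longrightarrow> card {T'\<in>B. p\<in>T'} = card T))"
proof -
  have finB: "finite B" using H1 H2 by (metis Pow_iff finite_Pow_iff finite_subset subsetI)
  define r where "r p = card {T'\<in>B. p\<in>T'}" for p
  define b where "b = card B"
  define v where "v = card C"
  have other: "\<exists>q\<in>C. q \<noteq> p" if "p \<in> C" for p
  proof (rule ccontr)
    assume "\<not> ?thesis" then have "C \<subseteq> {p}" by auto
    then have "card C \<le> 1" by (metis card.empty card.insert empty_iff finite.intros(1) card_mono finite.emptyI finite_insert le_zero_eq not_one_le_zero subset_singletonD order_refl One_nat_def)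
    then show False using H6 by simp
  qed
  have exT: "\<exists>T\<in>B. p\<notin>T" if pC: "p \<in> C" for p
  proof (rule ccontr)
    assume all: "\<not> ?thesis"
    obtain q where q: "q\<in>C" "q\<noteq>p" using other pC by blast
    obtain T1 where T1: "T1\<in>B" "p\<in>T1" "q\<in>T1" using H3 q pC by metis
    have "T1 \<noteq> C" using H5 T1 by auto
    then obtain x where x: "x\<in>C" "x\<notin>T1" using H2 T1 by blast
    then have "x \<noteq> q" using T1 by auto
    then obtain T2 where T2: "T2\<in>B" "q\<in>T2" "x\<in>T2" using H3 q x by metis
    have "p \<in> T2" using all T2 by blast
    have "finite T1" using H1 H2 T1 finite_subset by blast
    then have "T1 = T2" using line_unique[OF H4, of T1 T2 p q] T1 T2 \<open>p\<in>T2\<close> q by auto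
    then show False using x T2 by auto
  qed
  have rpos: "1 \<le> r p" if pC: "p \<in> C" for p
  proof -
    obtain q where q: "q\<in>C" "q\<noteq>p" using other pC by blast
    obtain T1 where T1: "T1\<in>B" "p\<in>T1" "q\<in>T1" using H3 q pC by metis
    have "{T'\<in>B. p\<in>T'} \<noteq> {}" using T1 by auto
    then show ?thesis unfolding r_def using finB
      by (metis (no_types, lifting) One_nat_def Suc_leI card_gt_0_iff finite_subset mem_Collect_eq subsetI)
  qed
  have rlt: "r p < b" if pC: "p \<in> C" for p
  proof -
    obtain T where "T\<in>B" "p\<notin>T" using exT pC by blast
    then have "{T'\<in>B. p\<in>T'} \<subset> B" by auto
    then show ?thesis unfolding r_def b_def using finB psubset_card_mono by blast
  qed
  have slt: "card T < v" if "T \<in> B" for T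
  proof -
    have "T \<subset> C" using H2 H5 that by auto
    then show ?thesis unfolding v_def using H1 psubset_card_mono by blast
  qed
  have cardCT: "card {p\<in>C. p\<notin>T} = v - card T" if "T\<in>B" for T
  proof -
    have "{p\<in>C. p\<notin>T} = C - T" by auto
    then show ?thesis unfolding v_def using H2 that H1
      by (metis card_Diff_subset finite_subset)
  qed
  have cardBp: "card {T\<in>B. p\<notin>T} = b - r p" for p
  proof -
    have "{T\<in>B. p\<notin>T} = B - {T\<in>B. p\<in>T}" by auto
    then show ?thesis unfolding b_def r_def using finB
      by (metis (no_types, lifting) card_Diff_subset finite_subset mem_Collect_eq subsetI)
  qed
  obtain p0 where p0: "p0 \<in> C" using H6 by fastforce
  have bpos: "0 < b" using rlt[OF p0] by simp
  have vpos: "0 < v" using H6 v_def by simp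
  define h1 where "h1 p T = 1 / (real b * (real v - real (card T)))" for p :: 'a and T :: "'a set"
  define h2 where "h2 p T = 1 / (real v * (real b - real (r p)))" for p :: 'a and T :: "'a set"
  have sum1: "(\<Sum>p\<in>C. \<Sum>T\<in>{T. T\<in>B \<and> p\<notin>T}. h1 p T) = 1"
  proof -
    have "(\<Sum>p\<in>C. \<Sum>T\<in>{T. T\<in>B \<and> p\<notin>T}. h1 p T) = (\<Sum>T\<in>B. \<Sum>p\<in>{p. p\<in>C \<and> p\<notin>T}. h1 p T)"
      by (rule sum.swap_restrict[OF H1 finB])
    also have "\<dots> = (\<Sum>T\<in>B. 1 / real b)"
    proof (rule sum.cong[OF refl])
      fix T assume T: "T \<in> B"
      have "(\<Sum>p\<in>{p. p\<in>C \<and> p\<notin>T}. h1 p T) = real (v - card T) * (1 / (real b * (real v - real (card T))))"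
        using cardCT[OF T] by (simp add: h1_def)
      also have "\<dots> = 1 / real b" using slt[OF T] bpos by (simp add: of_nat_diff)
      finally show "(\<Sum>p\<in>{p. p\<in>C \<and> p\<notin>T}. h1 p T) = 1 / real b" .
    qed
    also have "\<dots> = 1" using bpos b_def by simp
    finally show ?thesis .
  qed
  have sum2: "(\<Sum>p\<in>C. \<Sum>T\<in>{T. T\<in>B \<and> p\<notin>T}. h2 p T) = 1"
  proof -
    have "(\<Sum>p\<in>C. \<Sum>T\<in>{T. T\<in>B \<and> p\<notin>T}. h2 p T) = (\<Sum>p\<in>C. 1 / real v)"
    proof (rule sum.cong[OF refl])
      fix p assume p: "p \<in> C"
      have "(\<Sum>T\<in>{T. T\<in>B \<and> p\<notin>T}. h2 p T) = real (b - r p) * (1 / (real v * (real b - real (r p))))"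
        using cardBp[of p] by (simp add: h2_def)
      also have "\<dots> = 1 / real v" using rlt[OF p] vpos by (simp add: of_nat_diff)
      finally show "(\<Sum>T\<in>{T. T\<in>B \<and> p\<notin>T}. h2 p T) = 1 / real v" .
    qed
    also have "\<dots> = 1" using vpos v_def by simp
    finally show ?thesis .
  qed
  have key: "\<forall>p\<in>C. \<forall>T\<in>B. p\<notin>T \<longrightarrow> b * card T = v * r p" if bv: "b \<le> v"
  proof -
    have le: "h1 p T \<le> h2 p T" if "p\<in>C" "T\<in>B" "p\<notin>T" for p T
    proof -
      have sr: "card T \<le> r p" using count_lines[OF H1 H2 H3 H4 that] r_def by simp
      have "b * card T \<le> v * r p" using sr bv by (meson mult_le_mono)
      then have a: "real b * real (card T) \<le> real v * real (r p)" by (metis of_nat_le_iff of_nat_mult)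
      have d1: "0 < real v * (real b - real (r p))" using rlt[OF that(1)] vpos by simp
      have d2: "0 < real b * (real v - real (card T))" using slt[OF that(2)] bpos by simp
      have "real v * (real b - real (r p)) \<le> real b * (real v - real (card T))"
        using a by (simp add: algebra_simps)
      then show ?thesis unfolding h1_def h2_def using d1 d2
        by (simp add: frac_le)
    qed
    have "(\<Sum>p\<in>C. \<Sum>T\<in>{T. T\<in>B \<and> p\<notin>T}. h2 p T - h1 p T) = 0"
      using sum1 sum2 by (simp add: sum_subtractf)
    moreover have nn: "\<And>p. p\<in>C \<Longrightarrow> 0 \<le> (\<Sum>T\<in>{T. T\<in>B \<and> p\<notin>T}. h2 p T - h1 p T)"
      using le by (intro sum_nonneg) auto
    ultimately have z: "\<forall>p\<in>C. (\<Sum>T\<in>{T. T\<in>B \<and> p\<notin>T}. h2 p T - h1 p T) = 0"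
      using sum_nonneg_eq_0_iff[OF H1, of "\<lambda>p. (\<Sum>T\<in>{T. T\<in>B \<and> p\<notin>T}. h2 p T - h1 p T)"] by blast
    show ?thesis
    proof (intro ballI impI)
      fix p T assume pT: "p\<in>C" "T\<in>B" "p\<notin>T"
      have "finite {T. T\<in>B \<and> p\<notin>T}" using finB by simp
      then have "\<forall>T\<in>{T. T\<in>B \<and> p\<notin>T}. h2 p T - h1 p T = 0"
        using sum_nonneg_eq_0_iff[of "{T. T\<in>B \<and> p\<notin>T}" "\<lambda>T. h2 p T - h1 p T"] z pT(1) le pT(1)
        by auto
      then have eq: "h1 p T = h2 p T" using pT by auto
      have d1: "0 < real v * (real b - real (r p))" using rlt[OF pT(1)] vpos by simp
      have d2: "0 < real b * (real v - real (card T))" using slt[OF pT(2)] bpos by simp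
      have "real v * (real b - real (r p)) = real b * (real v - real (card T))"
        using eq d1 d2 unfolding h1_def h2_def by (simp add: field_simps)
      then have "real b * real (card T) = real v * real (r p)" by (simp add: algebra_simps)
      then show "b * card T = v * r p" by (metis of_nat_eq_iff of_nat_mult)
    qed
  qed
  have part1: "v \<le> b"
  proof (rule ccontr)
    assume "\<not> v \<le> b"
    then have bv: "b < v" by simp
    obtain T where T: "T\<in>B" "p0\<notin>T" using exT p0 by blast
    have sr: "card T \<le> r p0" using count_lines[OF H1 H2 H3 H4 p0 T] r_def by simp
    have "b * card T = v * r p0" using key bv p0 T by auto
    moreover have "b * card T \<le> b * r p0" using sr by simp
    moreover have "b * r p0 < v * r p0" using bv rpos[OF p0] by simp
    ultimately show False by linarith
  qed
  show ?thesis
  proof (intro conjI impI ballI)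
    show "card C \<le> card B" using part1 v_def b_def by simp
    fix p T assume eq: "card C = card B" and pT: "p\<in>C" "T\<in>B" "p\<notin>T"
    have "b * card T = b * r p" using key eq pT v_def b_def by auto
    then show "card {T'\<in>B. p\<in>T'} = card T" using bpos r_def by simp
  qed
qed


lemma big_clique_bound:
  fixes \<L> :: "'a set set" and k :: nat
  assumes "k > 0" and fL: "finite \<L>" and cL: "card \<L> = k"
    and sz: "\<forall>L\<in>\<L>. finite L \<and> card L = k"
    and ix: "\<forall>L1\<in>\<L>. \<forall>L2\<in>\<L>. L1 \<noteq> L2 \<longrightarrow> card (L1 \<inter> L2) \<le> 1"
    and cl: "is_clique (\<Union>\<L>) (union_adj \<L>) C"
    and nsub: "\<forall>L\<in>\<L>. \<not> C \<subseteq> L" and c2: "2 \<le> card C"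
  shows "card C \<le> card ((\<lambda>L. L \<inter> C) ` {L\<in>\<L>. 2 \<le> card (L\<inter>C)}) \<and>
    (card C = card ((\<lambda>L. L \<inter> C) ` {L\<in>\<L>. 2 \<le> card (L\<inter>C)}) \<longrightarrow>
      (\<forall>p\<in>C. \<forall>T\<in>(\<lambda>L. L \<inter> C) ` {L\<in>\<L>. 2 \<le> card (L\<inter>C)}. p\<notin>T \<longrightarrow>
         card {T'\<in>(\<lambda>L. L \<inter> C) ` {L\<in>\<L>. 2 \<le> card (L\<inter>C)}. p\<in>T'} = card T))"
proof (rule dBE)
  have fV: "finite (\<Union>\<L>)" using fL sz by auto
  show fC: "finite C" using cl fV unfolding is_clique_def using finite_subset by blast
  show "\<forall>T\<in>(\<lambda>L. L \<inter> C) ` {L\<in>\<L>. 2 \<le> card (L\<inter>C)}. T \<subseteq> C" by auto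
  show "\<forall>x\<in>C. \<forall>y\<in>C. x\<noteq>y \<longrightarrow> (\<exists>T\<in>(\<lambda>L. L \<inter> C) ` {L\<in>\<L>. 2 \<le> card (L\<inter>C)}. x\<in>T \<and> y\<in>T)"
  proof (intro ballI impI)
    fix x y assume xy: "x\<in>C" "y\<in>C" "x\<noteq>y"
    then obtain L where L: "L\<in>\<L>" "x\<in>L" "y\<in>L" using cl unfolding is_clique_def union_adj_def by blast
    have "card {x,y} \<le> card (L\<inter>C)" by (rule card_mono) (use fC L xy in auto)
    then have "2 \<le> card (L\<inter>C)" using xy by simp
    then show "\<exists>T\<in>(\<lambda>L. L \<inter> C) ` {L\<in>\<L>. 2 \<le> card (L\<inter>C)}. x\<in>T \<and> y\<in>T" using L xy by blast
  qed
  show "\<forall>T1\<in>(\<lambda>L. L \<inter> C) ` {L\<in>\<L>. 2 \<le> card (L\<inter>C)}. \<forall>T2\<in>(\<lambda>L. L \<inter> C) ` {L\<in>\<L>. 2 \<le> card (L\<inter>C)}. T1\<noteq>T2 \<longrightarrow> card(T1\<inter>T2) \<le> 1"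
  proof (intro ballI impI)
    fix T1 T2 assume T: "T1 \<in> (\<lambda>L. L \<inter> C) ` {L\<in>\<L>. 2 \<le> card (L\<inter>C)}" "T2 \<in> (\<lambda>L. L \<inter> C) ` {L\<in>\<L>. 2 \<le> card (L\<inter>C)}" "T1 \<noteq> T2"
    then obtain L1 L2 where L: "L1\<in>\<L>" "L2\<in>\<L>" "T1 = L1\<inter>C" "T2 = L2\<inter>C" by auto
    then have "L1 \<noteq> L2" using T by auto
    then have "card (L1\<inter>L2) \<le> 1" using ix L by auto
    moreover have "card (T1\<inter>T2) \<le> card (L1\<inter>L2)" by (rule card_mono) (use L sz in auto)
    ultimately show "card(T1\<inter>T2) \<le> 1" by simp
  qed
  show "C \<notin> (\<lambda>L. L \<inter> C) ` {L\<in>\<L>. 2 \<le> card (L\<inter>C)}" using nsub by auto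
  show "2 \<le> card C" by fact
qed

lemma clique_le_k:
  fixes \<L> :: "'a set set" and k :: nat
  assumes kpos: "k > 0" and fL: "finite \<L>" and cL: "card \<L> = k"
    and sz: "\<forall>L\<in>\<L>. finite L \<and> card L = k"
    and ix: "\<forall>L1\<in>\<L>. \<forall>L2\<in>\<L>. L1 \<noteq> L2 \<longrightarrow> card (L1 \<inter> L2) \<le> 1"
    and cl: "is_clique (\<Union>\<L>) (union_adj \<L>) C"
  shows "card C \<le> k"
proof (cases "\<exists>L\<in>\<L>. C \<subseteq> L")
  case True
  then obtain L where "L\<in>\<L>" "C \<subseteq> L" by blast
  then show ?thesis using sz card_mono by metis
next
  case False
  show ?thesis
  proof (cases "2 \<le> card C")
    case True
    have "card C \<le> card ((\<lambda>L. L \<inter> C) ` {L\<in>\<L>. 2 \<le> card (L\<inter>C)})"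
      using big_clique_bound[OF assms] False True by blast
    also have "\<dots> \<le> card {L\<in>\<L>. 2 \<le> card (L\<inter>C)}" by (rule card_image_le) (use fL in simp)
    also have "\<dots> \<le> card \<L>" by (rule card_mono) (use fL in auto)
    finally show ?thesis using cL by simp
  next
    case False then show ?thesis using kpos by simp
  qed
qed

theorem lemma3p4:
  fixes \<L> :: "'a set set" and k :: nat
  assumes "k > 0"
    and "finite \<L>" and "card \<L> = k"
    and "\<forall>L\<in>\<L>. finite L \<and> card L = k"
    and "\<forall>L1\<in>\<L>. \<forall>L2\<in>\<L>. L1 \<noteq> L2 \<longrightarrow> card (L1 \<inter> L2) \<le> 1"
  shows "clique_number (\<Union>\<L>) (union_adj \<L>) = k \<and>
         ((\<exists>C. is_maximal_clique (\<Union>\<L>) (union_adj \<L>) C \<and> card C = k \<and> C \<notin> \<L>)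
           \<longrightarrow> chordal (\<Union>\<L>) (union_adj \<L>))"
proof -
  note kpos = assms(1) and fL = assms(2) and cL = assms(3) and sz = assms(4) and ix = assms(5)
  have fV: "finite (\<Union>\<L>)" using fL sz by auto
  have Lcl: "is_clique (\<Union>\<L>) (union_adj \<L>) L" if "L \<in> \<L>" for L
    using that unfolding is_clique_def union_adj_def by blast
  obtain L0 where L0: "L0 \<in> \<L>" using kpos cL by (metis card.empty ex_in_conv less_irrefl)
  have part1: "clique_number (\<Union>\<L>) (union_adj \<L>) = k"
    unfolding clique_number_def
  proof (rule Max_eqI)
    have "{C. is_clique (\<Union>\<L>) (union_adj \<L>) C} \<subseteq> Pow (\<Union>\<L>)" unfolding is_clique_def by auto
    then show "finite (card ` {C. is_clique (\<Union>\<L>) (union_adj \<L>) C})"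
      using fV by (meson finite_Pow_iff finite_imageI finite_subset)
    show "\<And>y. y \<in> card ` {C. is_clique (\<Union>\<L>) (union_adj \<L>) C} \<Longrightarrow> y \<le> k"
      using clique_le_k[OF assms] by blast
    show "k \<in> card ` {C. is_clique (\<Union>\<L>) (union_adj \<L>) C}"
      using Lcl[OF L0] sz L0 by force
  qed
  have part2: "chordal (\<Union>\<L>) (union_adj \<L>)"
    if exC: "\<exists>C. is_maximal_clique (\<Union>\<L>) (union_adj \<L>) C \<and> card C = k \<and> C \<notin> \<L>"
  proof -
    obtain C where C: "is_maximal_clique (\<Union>\<L>) (union_adj \<L>) C" "card C = k" "C \<notin> \<L>" using exC by blast
    have cl: "is_clique (\<Union>\<L>) (union_adj \<L>) C" using C unfolding is_maximal_clique_def by blast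
    have fC: "finite C" using cl fV unfolding is_clique_def using finite_subset by blast
    have nsub: "\<forall>L\<in>\<L>. \<not> C \<subseteq> L"
    proof (intro ballI notI)
      fix L assume "L \<in> \<L>" "C \<subseteq> L"
      then have "L = C" using C(1) Lcl unfolding is_maximal_clique_def by blast
      then show False using C \<open>L\<in>\<L>\<close> by simp
    qed
    have c2: "2 \<le> card C"
    proof (rule ccontr)
      assume "\<not> 2 \<le> card C"
      then have "card C = 1" using C kpos by simp
      then obtain x where "C = {x}" using card_1_singletonE by blast
      then obtain L where "L\<in>\<L>" "x \<in> L" using cl unfolding is_clique_def by auto
      then show False using nsub \<open>C = {x}\<close> by auto
    qed
    define S where "S = {L\<in>\<L>. 2 \<le> card (L\<inter>C)}"
    define B where "B = (\<lambda>L. L \<inter> C) ` S"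
    have bnd: "card C \<le> card B \<and> (card C = card B \<longrightarrow>
      (\<forall>p\<in>C. \<forall>T\<in>B. p\<notin>T \<longrightarrow> card {T'\<in>B. p\<in>T'} = card T))"
      using big_clique_bound[OF assms cl nsub c2] unfolding B_def S_def .
    have "card B \<le> card S" unfolding B_def by (rule card_image_le) (use fL S_def in simp)
    moreover have "card S \<le> card \<L>" unfolding S_def by (rule card_mono) (use fL in auto)
    ultimately have eqB: "card C = card B" "card S = card \<L>" using bnd C cL by linarith+
    have SL: "S = \<L>" using card_subset_eq[OF fL _ eqB(2)] S_def by auto
    have eqr: "\<forall>p\<in>C. \<forall>T\<in>B. p\<notin>T \<longrightarrow> card {T'\<in>B. p\<in>T'} = card T" using bnd eqB by blast
    have finB: "finite B" unfolding B_def using fL S_def by simp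
    have inter: "L1 \<inter> L2 \<subseteq> C" if L12: "L1\<in>\<L>" "L2\<in>\<L>" "L1\<noteq>L2" for L1 L2
    proof
      fix x assume x: "x \<in> L1 \<inter> L2"
      show "x \<in> C"
      proof (rule ccontr)
        assume xC: "x \<notin> C"
        define T1 where "T1 = L1 \<inter> C"
        define T2 where "T2 = L2 \<inter> C"
        have T1B: "T1 \<in> B" "T2 \<in> B" using L12 SL unfolding B_def T1_def T2_def by auto
        have c1: "2 \<le> card T1" "2 \<le> card T2" using L12 SL unfolding S_def T1_def T2_def by auto
        have disj: "T1 \<inter> T2 = {}"
        proof (rule ccontr)
          assume "T1 \<inter> T2 \<noteq> {}"
          then obtain y where y: "y \<in> T1 \<inter> T2" by blast
          have yL: "y \<in> L1 \<inter> L2" using y unfolding T1_def T2_def by blast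
          have xy: "x \<noteq> y" using y xC unfolding T1_def by blast
          have fin: "finite (L1 \<inter> L2)" using sz L12(1) by blast
          have "card {x,y} \<le> card (L1 \<inter> L2)" by (intro card_mono fin) (use x yL in blast)
          moreover have "card (L1 \<inter> L2) \<le> 1" using ix L12 by blast
          ultimately show False using xy by simp
        qed
        have "T2 \<noteq> {}" using c1(2) by (cases "T2 = {}") auto
        then obtain p where p: "p \<in> T2" by blast
        have pC: "p \<in> C" "p \<notin> T1" using p disj T2_def by auto
        have cnt: "card T1 + card {T'\<in>B. p\<in>T' \<and> T'\<inter>T1 = {}} \<le> card {T'\<in>B. p\<in>T'}"
        proof (rule count_lines[OF fC _ _ _ pC(1) T1B(1) pC(2)])
          show "\<forall>T\<in>B. T \<subseteq> C" unfolding B_def by auto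
          show "\<forall>x\<in>C. \<forall>y\<in>C. x\<noteq>y \<longrightarrow> (\<exists>T\<in>B. x\<in>T \<and> y\<in>T)"
          proof (intro ballI impI)
            fix x y assume xy: "x\<in>C" "y\<in>C" "x\<noteq>y"
            then obtain L where L: "L\<in>\<L>" "x\<in>L" "y\<in>L" using cl unfolding is_clique_def union_adj_def by blast
            then show "\<exists>T\<in>B. x\<in>T \<and> y\<in>T" using SL xy unfolding B_def by blast
          qed
          show "\<forall>T1\<in>B. \<forall>T2\<in>B. T1\<noteq>T2 \<longrightarrow> card(T1\<inter>T2) \<le> 1"
          proof (intro ballI impI)
            fix T1 T2 assume T: "T1 \<in> B" "T2 \<in> B" "T1 \<noteq> T2"
            then obtain L1 L2 where L: "L1\<in>\<L>" "L2\<in>\<L>" "T1 = L1\<inter>C" "T2 = L2\<inter>C" unfolding B_def S_def by auto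
            then have "L1 \<noteq> L2" using T by auto
            then have "card (L1\<inter>L2) \<le> 1" using ix L by auto
            moreover have "card (T1\<inter>T2) \<le> card (L1\<inter>L2)" by (rule card_mono) (use L sz in auto)
            ultimately show "card(T1\<inter>T2) \<le> 1" by simp
          qed
        qed
        have "T2 \<in> {T'\<in>B. p\<in>T' \<and> T'\<inter>T1 = {}}" using T1B p disj by auto
        then have "1 \<le> card {T'\<in>B. p\<in>T' \<and> T'\<inter>T1 = {}}" using finB
          by (metis (no_types, lifting) One_nat_def Suc_leI card_gt_0_iff empty_iff finite_subset mem_Collect_eq subsetI)
        then show False using cnt eqr pC T1B by fastforce
      qed
    qed
    have outside: "union_adj \<L> a b"
      if yab: "y \<notin> C" "union_adj \<L> y a" "union_adj \<L> y b" "a \<noteq> b" for y a b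
    proof -
      obtain L where L: "L\<in>\<L>" "y\<in>L" "a\<in>L" using yab unfolding union_adj_def by blast
      obtain L' where L': "L'\<in>\<L>" "y\<in>L'" "b\<in>L'" using yab unfolding union_adj_def by blast
      have "L = L'" using inter L L' yab(1) by blast
      then show ?thesis using L L' yab(4) unfolding union_adj_def by blast
    qed
    show ?thesis unfolding chordal_def
    proof
      assume "\<exists>n f. 4 \<le> n \<and> induced_cycle (\<Union>\<L>) (union_adj \<L>) n f"
      then obtain n f where n: "4 \<le> n" and ic: "induced_cycle (\<Union>\<L>) (union_adj \<L>) n f" by blast
      have inj: "inj_on f {..<n}" and adj: "\<forall>i<n. \<forall>j<n. i \<noteq> j \<longrightarrow> (union_adj \<L> (f i) (f j) \<longleftrightarrow> (j = Suc i mod n \<or> i = Suc j mod n))"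
        using ic unfolding induced_cycle_def by auto
      have A: "union_adj \<L> (f i) (f j) = (j = Suc i mod n \<or> i = Suc j mod n)"
        if "i<n" "j<n" "i\<noteq>j" for i j using adj that by blast
      have sym: "union_adj \<L> u v \<Longrightarrow> union_adj \<L> v u" for u v unfolding union_adj_def by blast
      have ne: "f i \<noteq> f j" if "i<n" "j<n" "i\<noteq>j" for i j using inj that by (meson inj_on_contraD lessThan_iff)
      have n1: "n - 1 < n" "n - 1 \<noteq> 0" "n - 1 \<noteq> 1" "n - 1 \<noteq> 2" "0 < n" "1 < n" "2 < n" "3 < n" using n by auto
      have m1: "Suc (n-1) mod n = 0" using n by simp
      have m2: "Suc 0 mod n = 1" "Suc 1 mod n = 2" "Suc 2 mod n = 3" using n by auto
      have m3: "Suc 3 mod n \<noteq> 1"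
      proof (cases "n = 4")
        case True then show ?thesis by simp
      next
        case False then have "Suc 3 mod n = 4" using n by simp
        then show ?thesis by simp
      qed
      have f0: "f 0 \<in> C"
      proof (rule ccontr)
        assume f0n: "f 0 \<notin> C"
        have a1: "union_adj \<L> (f 0) (f 1)" using A[of 0 1] n1 m2 by simp
        have "union_adj \<L> (f (n-1)) (f 0)" using A[of "n-1" 0] n1 m1 by simp
        then have a2: "union_adj \<L> (f 0) (f (n-1))" by (rule sym)
        have "f 1 \<noteq> f (n-1)" using ne[of 1 "n-1"] n1 by simp
        then have "union_adj \<L> (f 1) (f (n-1))" using outside[OF f0n a1 a2] by blast
        then show False using A[of 1 "n-1"] n1 m1 m2 by simp
      qed
      have f2: "f 2 \<in> C"
      proof (rule ccontr)
        assume f2n: "f 2 \<notin> C"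
        have a1: "union_adj \<L> (f 2) (f 3)" using A[of 2 3] n1 m2 by simp
        have a2: "union_adj \<L> (f 2) (f 1)" using A[of 2 1] n1 m2 by simp
        have "f 3 \<noteq> f 1" using ne[of 3 1] n1 by simp
        then have "union_adj \<L> (f 3) (f 1)" using outside[OF f2n a1 a2] by blast
        then show False using A[of 3 1] n1 m2 m3 by simp
      qed
      have "f 0 \<noteq> f 2" using ne[of 0 2] n1 by simp
      then have "union_adj \<L> (f 0) (f 2)" using cl f0 f2 unfolding is_clique_def by blast
      then show False using A[of 0 2] n1 m2 by simp
    qed
  qed
  show ?thesis using part1 part2 by blast
qed

end
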